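(* Let $\alpha\ge 1$ and let $G=(V,E)$ be a finite connected undirected unweighted $\alpha$-almost regular graph with $n$ vertices. If $r\ge\alpha^2$, then for every $\lambda\in[0,1]$ and every nonempty initial mutant set $S_0\subseteq V$, the $\lambda$-mixed Moran process with fitness $r$ has expected absorption time $O_r(n^4)$ and fixation probability $\Omega_r(n^{-2})$; that is, there are constants $C_r,c_r>0$ depending only on $r$ (not on $G$, $n$, $\lambda$ or $S_0$) with absorption time at most $C_r n^4$ and $\mathrm{fp}^{\lambda,r}_G(S_0)\ge c_r n^{-2}$.
   Context: A graph is $\alpha$-almost regular if its maximum degree is at most $\alpha$ times its minimum degree. The $\lambda$-mixed Moran process on a connected graph $G=(V,E)$ with $n=|V|\ge 2$: each vertex hosts a resident (fitness $1$) or mutant (fitness $r>0$); the state is the mutant set $S_t\subseteq V$. Each step, independently: with probability $\lambda$ a Birth-death step (a vertex $u$ chosen with probability proportional to fitness among all vertices; a uniformly random neighbor of $u$ takes $u$'s type); with probability $1-\lambda$ a death-Birth step (a uniformly random vertex $v$ dies; a neighbor $u$ of $v$ chosen with probability proportional to fitness among the neighbors of $v$; $v$ takes $u$'s type). $\mathrm{fp}^{\lambda,r}_G(S_0)$ is the probability of reaching $S_t=V$ from $S_0$; the absorption time is the expected number of steps until $S_t\in\{\emptyset,V\}$. *)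

theory Defs
  imports "HOL-Analysis.Analysis"
begin

definition graph :: "'a set \<Rightarrow> ('a \<Rightarrow> 'a \<Rightarrow> bool) \<Rightarrow> bool" where
  "graph V E \<longleftrightarrow> finite V \<and> (\<forall>u v. E u v \<longrightarrow> u \<in> V \<and> v \<in> V)
     \<and> (\<forall>u v. E u v \<longrightarrow> E v u) \<and> (\<forall>u. \<not> E u u)"

definition connected_graph :: "'a set \<Rightarrow> ('a \<Rightarrow> 'a \<Rightarrow> bool) \<Rightarrow> bool" where
  "connected_graph V E \<longleftrightarrow> graph V E \<and> (\<forall>u\<in>V. \<forall>v\<in>V. E\<^sup>*\<^sup>* u v)"

definition nbrs :: "'a set \<Rightarrow> ('a \<Rightarrow> 'a \<Rightarrow> bool) \<Rightarrow> 'a \<Rightarrow> 'a set" where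
  "nbrs V E u = {v \<in> V. E u v}"

definition deg :: "'a set \<Rightarrow> ('a \<Rightarrow> 'a \<Rightarrow> bool) \<Rightarrow> 'a \<Rightarrow> nat" where
  "deg V E u = card (nbrs V E u)"

definition almost_regular :: "real \<Rightarrow> 'a set \<Rightarrow> ('a \<Rightarrow> 'a \<Rightarrow> bool) \<Rightarrow> bool" where
  "almost_regular \<alpha> V E \<longleftrightarrow>
     real (Max (deg V E ` V)) \<le> \<alpha> * real (Min (deg V E ` V))"

definition fitness :: "real \<Rightarrow> 'a set \<Rightarrow> 'a \<Rightarrow> real" where
  "fitness r S u = (if u \<in> S then r else 1)"

definition copy_type :: "'a set \<Rightarrow> 'a \<Rightarrow> 'a \<Rightarrow> 'a set" where
  "copy_type S u v = (if u \<in> S then insert v S else S - {v})"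

definition moran_trans ::
  "'a set \<Rightarrow> ('a \<Rightarrow> 'a \<Rightarrow> bool) \<Rightarrow> real \<Rightarrow> real \<Rightarrow> 'a set \<Rightarrow> 'a set \<Rightarrow> real" where
  "moran_trans V E lam r S T =
     lam * (\<Sum>u\<in>V. \<Sum>v\<in>nbrs V E u.
              (fitness r S u / (\<Sum>w\<in>V. fitness r S w)) * (1 / real (deg V E u))
              * (if copy_type S u v = T then 1 else 0))
   + (1 - lam) * (\<Sum>v\<in>V. \<Sum>u\<in>nbrs V E v.
              (1 / real (card V)) * (fitness r S u / (\<Sum>w\<in>nbrs V E v. fitness r S w))
              * (if copy_type S u v = T then 1 else 0))"

fun moran_steps ::
  "'a set \<Rightarrow> ('a \<Rightarrow> 'a \<Rightarrow> bool) \<Rightarrow> real \<Rightarrow> real \<Rightarrow> nat \<Rightarrow> 'a set \<Rightarrow> 'a set \<Rightarrow> real" where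
  "moran_steps V E lam r 0 S T = (if S = T then 1 else 0)"
| "moran_steps V E lam r (Suc k) S T =
     (\<Sum>U\<in>Pow V. moran_steps V E lam r k S U * moran_trans V E lam r U T)"

text \<open>Fixation probability: probability of eventually reaching S_t = V
(limit of P(S_k = V), V being absorbing).\<close>
definition fixation_prob ::
  "'a set \<Rightarrow> ('a \<Rightarrow> 'a \<Rightarrow> bool) \<Rightarrow> real \<Rightarrow> real \<Rightarrow> 'a set \<Rightarrow> real" where
  "fixation_prob V E lam r S0 = lim (\<lambda>k. moran_steps V E lam r k S0 V)"

text \<open>Expected absorption time: E[T] = sum over k of P(T > k), where
T is the first time S_t is in {empty, V}.\<close>
definition absorption_time ::
  "'a set \<Rightarrow> ('a \<Rightarrow> 'a \<Rightarrow> bool) \<Rightarrow> real \<Rightarrow> real \<Rightarrow> 'a set \<Rightarrow> ennreal" where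
  "absorption_time V E lam r S0 =
     (\<Sum>k. ennreal (\<Sum>U\<in>Pow V - {{}, V}. moran_steps V E lam r k S0 U))"

end

theory Submission
  imports Defs
begin



locale mor =
  fixes V :: "'a set" and E :: "'a \<Rightarrow> 'a \<Rightarrow> bool" and lam r :: real
  assumes conn: "connected_graph V E" and card2: "card V \<ge> 2"
    and lam0: "0 \<le> lam" and lam1: "lam \<le> 1" and r1: "r \<ge> 1"
begin

lemma finV: "finite V" using conn by (simp add: connected_graph_def graph_def)
lemma edgeV: "E u v \<Longrightarrow> u \<in> V \<and> v \<in> V" using conn by (simp add: connected_graph_def graph_def)
lemma esym: "E u v \<Longrightarrow> E v u" using conn by (simp add: connected_graph_def graph_def)
lemma eirr: "\<not> E u u" using conn by (simp add: connected_graph_def graph_def)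
lemma reach: "u \<in> V \<Longrightarrow> v \<in> V \<Longrightarrow> E\<^sup>*\<^sup>* u v" using conn by (simp add: connected_graph_def)

lemma nbrs_sub: "nbrs V E u \<subseteq> V" by (auto simp: nbrs_def)
lemma fin_nbrs[simp]: "finite (nbrs V E u)" using finV nbrs_sub finite_subset by blast
lemma in_nbrs: "v \<in> nbrs V E u \<longleftrightarrow> E u v" using edgeV by (auto simp: nbrs_def)

lemma has_nbr: assumes "u \<in> V" shows "\<exists>v. E u v"
proof -
  have "card (V - {u}) > 0" using card2 finV assms by (simp add: card_Diff_singleton)
  then obtain w where w: "w \<in> V" "w \<noteq> u" by (metis card_gt_0_iff Diff_iff ex_in_conv singletonI)
  have "E\<^sup>*\<^sup>* u w" using reach assms w by auto
  then show ?thesis using w(2) by (cases rule: converse_rtranclpE) auto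
qed

lemma deg_pos: "u \<in> V \<Longrightarrow> deg V E u > 0"
  using has_nbr[of u] by (auto simp: deg_def card_gt_0_iff in_nbrs)

lemma deg_le: "deg V E u \<le> card V"
  unfolding deg_def using nbrs_sub finV by (simp add: card_mono)

lemma fit_ge1: "fitness r S u \<ge> 1" using r1 by (simp add: fitness_def)
lemma fit_le: "fitness r S u \<le> r" using r1 by (simp add: fitness_def)

definition W where "W S = (\<Sum>w\<in>V. fitness r S w)"
definition F where "F S v = (\<Sum>w\<in>nbrs V E v. fitness r S w)"

lemma W_ge: "W S \<ge> real (card V)"
  unfolding W_def using sum_mono[of V "\<lambda>_. 1" "fitness r S", OF fit_ge1] by simp
lemma W_le: "W S \<le> r * real (card V)"
  unfolding W_def using sum_mono[of V "fitness r S" "\<lambda>_. r", OF fit_le] by (simp add: mult.commute)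
lemma cardpos: "real (card V) > 0" using card2 by simp
lemma W_pos: "W S > 0" using W_ge[of S] cardpos by linarith

lemma F_ge: "F S v \<ge> real (deg V E v)"
  unfolding F_def deg_def using sum_mono[of "nbrs V E v" "\<lambda>_. 1" "fitness r S", OF fit_ge1] by simp
lemma F_le: "F S v \<le> r * real (deg V E v)"
  unfolding F_def deg_def using sum_mono[of "nbrs V E v" "fitness r S" "\<lambda>_. r", OF fit_le] by (simp add: mult.commute)
lemma F_pos: "v \<in> V \<Longrightarrow> F S v > 0" using F_ge[where S=S and v=v] deg_pos[of v] by linarith

definition bd where "bd S u = fitness r S u / (\<Sum>w\<in>V. fitness r S w) * (1 / real (deg V E u))"
definition db where "db S v u = 1 / real (card V) * (fitness r S u / (\<Sum>w\<in>nbrs V E v. fitness r S w))"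

lemma bd_nn: "bd S u \<ge> 0" unfolding bd_def using fit_ge1[of S] W_pos[of S]
  by (simp add: W_def order.trans[OF zero_le_one])
lemma db_nn: "db S v u \<ge> 0" unfolding db_def
  by (intro mult_nonneg_nonneg divide_nonneg_nonneg sum_nonneg) (auto intro: order.trans[OF zero_le_one fit_ge1])

definition Drift where "Drift S h =
   lam * (\<Sum>u\<in>V. \<Sum>v\<in>nbrs V E u. bd S u * h u v)
 + (1 - lam) * (\<Sum>v\<in>V. \<Sum>u\<in>nbrs V E v. db S v u * h u v)"

lemma bd_total: "(\<Sum>u\<in>V. \<Sum>v\<in>nbrs V E u. bd S u) = 1"
proof -
  have "(\<Sum>u\<in>V. \<Sum>v\<in>nbrs V E u. bd S u) = (\<Sum>u\<in>V. fitness r S u / W S)"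
  proof (rule sum.cong)
    fix u assume u: "u \<in> V"
    have "(\<Sum>v\<in>nbrs V E u. bd S u) = real (deg V E u) * bd S u" by (simp add: deg_def)
    also have "\<dots> = fitness r S u / W S" using deg_pos[OF u] by (simp add: bd_def W_def)
    finally show "(\<Sum>v\<in>nbrs V E u. bd S u) = fitness r S u / W S" .
  qed simp
  also have "\<dots> = (\<Sum>u\<in>V. fitness r S u) / W S" by (rule sum_divide_distrib[symmetric])
  also have "\<dots> = W S / W S" by (simp add: W_def)
  also have "\<dots> = 1" using W_pos[of S] by simp
  finally show ?thesis .
qed

lemma db_total: "(\<Sum>v\<in>V. \<Sum>u\<in>nbrs V E v. db S v u) = 1"
proof -
  have "(\<Sum>v\<in>V. \<Sum>u\<in>nbrs V E v. db S v u) = (\<Sum>v\<in>V. 1 / real (card V))"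
  proof (rule sum.cong)
    fix v assume v: "v \<in> V"
    have "(\<Sum>u\<in>nbrs V E v. db S v u) = 1 / real (card V) * (\<Sum>u\<in>nbrs V E v. fitness r S u / F S v)"
      unfolding db_def F_def by (rule sum_distrib_left[symmetric])
    also have "\<dots> = 1 / real (card V) * (F S v / F S v)"
      unfolding F_def by (subst sum_divide_distrib[symmetric]) (rule refl)
    also have "\<dots> = 1 / real (card V)" using F_pos[OF v, of S] by simp
    finally show "(\<Sum>u\<in>nbrs V E v. db S v u) = 1 / real (card V)" .
  qed simp
  also have "\<dots> = 1" using cardpos by simp
  finally show ?thesis .
qed

lemma Drift_lin: "Drift S (\<lambda>u v. a * h1 u v + b * h2 u v) = a * Drift S h1 + b * Drift S h2"
  unfolding Drift_def by (simp add: sum.distrib sum_distrib_left algebra_simps)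

lemma Drift_const: "Drift S (\<lambda>u v. c) = c"
proof -
  have "Drift S (\<lambda>u v. c) = lam * (c * (\<Sum>u\<in>V. \<Sum>v\<in>nbrs V E u. bd S u))
     + (1 - lam) * (c * (\<Sum>v\<in>V. \<Sum>u\<in>nbrs V E v. db S v u))"
    unfolding Drift_def by (simp add: sum_distrib_left algebra_simps)
  then show ?thesis by (simp only: bd_total db_total) (simp add: algebra_simps)
qed

lemma Drift_cong: "(\<And>u v. E u v \<Longrightarrow> h u v = h' u v) \<Longrightarrow> Drift S h = Drift S h'"
  unfolding Drift_def by (auto intro!: sum.cong arg_cong2[where f="(+)"] simp: in_nbrs esym)

lemma Drift_nn: "(\<And>u v. E u v \<Longrightarrow> h u v \<ge> 0) \<Longrightarrow> Drift S h \<ge> 0"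
  unfolding Drift_def using lam0 lam1 bd_nn db_nn
  by (intro add_nonneg_nonneg mult_nonneg_nonneg sum_nonneg) (auto simp: in_nbrs esym)

lemma Drift_mono: "(\<And>u v. E u v \<Longrightarrow> h u v \<le> h' u v) \<Longrightarrow> Drift S h \<le> Drift S h'"
proof -
  assume a: "\<And>u v. E u v \<Longrightarrow> h u v \<le> h' u v"
  have "Drift S (\<lambda>u v. 1 * h' u v + (-1) * h u v) \<ge> 0" by (rule Drift_nn) (use a in auto)
  moreover have "Drift S (\<lambda>u v. 1 * h' u v + (-1) * h u v) = 1 * Drift S h' + (-1) * Drift S h"
    by (rule Drift_lin)
  ultimately show ?thesis by linarith
qed

end


context mor begin

lemma copy_in: "S \<subseteq> V \<Longrightarrow> v \<in> V \<Longrightarrow> copy_type S u v \<in> Pow V"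
  by (auto simp: copy_type_def)

lemma trans_eq: "moran_trans V E lam r S T = Drift S (\<lambda>u v. if copy_type S u v = T then 1 else 0)"
  unfolding moran_trans_def Drift_def bd_def db_def by simp

lemma trans_nn: "moran_trans V E lam r S T \<ge> 0"
  unfolding trans_eq by (rule Drift_nn) simp

lemma Drift_scale: "Drift S (\<lambda>u v. c * h u v) = c * Drift S h"
  using Drift_lin[of S c h 0 h] by simp

lemma swap3: "(\<Sum>T\<in>P. \<Sum>u\<in>A. \<Sum>v\<in>B u. f T u v) = (\<Sum>u\<in>A. \<Sum>v\<in>B u. \<Sum>T\<in>P. f T u v)"
  by (subst sum.swap) (rule sum.cong[OF refl], rule sum.swap)

lemma Drift_sum: "(\<Sum>T\<in>P. Drift S (h T)) = Drift S (\<lambda>u v. \<Sum>T\<in>P. h T u v)"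
  unfolding Drift_def by (simp add: sum.distrib sum_distrib_left swap3)

lemma sum_delta1: "finite P \<Longrightarrow> X \<in> P \<Longrightarrow> (\<Sum>T\<in>P. (if X = T then 1 else 0) * f T) = (f X :: real)"
proof -
  assume a: "finite P" "X \<in> P"
  have "(\<Sum>T\<in>P. (if X = T then 1 else 0) * f T) = (\<Sum>T\<in>P. if X = T then f T else 0)"
    by (rule sum.cong) auto
  also have "\<dots> = f X" using sum.delta'[OF a(1), of X f] a(2) by simp
  finally show ?thesis .
qed

definition Exp where "Exp U f = (\<Sum>T\<in>Pow V. moran_trans V E lam r U T * f T)"

lemma Exp_Drift: assumes "U \<subseteq> V" shows "Exp U f = Drift U (\<lambda>u v. f (copy_type U u v))"
proof -
  have "Exp U f = (\<Sum>T\<in>Pow V. Drift U (\<lambda>u v. (if copy_type U u v = T then 1 else 0) * f T))"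
    unfolding Exp_def trans_eq by (rule sum.cong[OF refl]) (subst mult.commute, simp add: Drift_scale[symmetric] mult.commute)
  also have "\<dots> = Drift U (\<lambda>u v. \<Sum>T\<in>Pow V. (if copy_type U u v = T then 1 else 0) * f T)"
    by (rule Drift_sum)
  also have "\<dots> = Drift U (\<lambda>u v. f (copy_type U u v))"
    by (rule Drift_cong) (use assms finV copy_in edgeV in \<open>simp add: sum_delta1\<close>)
  finally show ?thesis .
qed

lemma Drift_affine: "Drift S (\<lambda>u v. c + a * h1 u v + b * h2 u v) = c + a * Drift S h1 + b * Drift S h2"
proof -
  have "Drift S (\<lambda>u v. c * 1 + 1 * (a * h1 u v + b * h2 u v))
      = c * Drift S (\<lambda>u v. 1) + 1 * Drift S (\<lambda>u v. a * h1 u v + b * h2 u v)"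
    by (rule Drift_lin)
  then show ?thesis by (simp add: Drift_const Drift_lin add.assoc)
qed

lemma steps_nn: "moran_steps V E lam r k S T \<ge> 0"
  by (induction k arbitrary: T) (auto intro!: sum_nonneg mult_nonneg_nonneg trans_nn)

lemma chain: "(\<Sum>T\<in>Pow V. moran_steps V E lam r (Suc k) S T * f T)
   = (\<Sum>U\<in>Pow V. moran_steps V E lam r k S U * Exp U f)"
  unfolding Exp_def by (simp add: sum_distrib_left sum_distrib_right mult.assoc) (rule sum.swap)

definition d where "d u = real (deg V E u)"
definition psi where "psi S = (\<Sum>x\<in>S. d x)"

lemma d_pos: "u \<in> V \<Longrightarrow> d u > 0" using deg_pos by (simp add: d_def)

lemma psi_copy: assumes "U \<subseteq> V" "v \<in> V"
  shows "psi (copy_type U u v) - psi U = (if u \<in> U \<and> v \<notin> U then d v else if u \<notin> U \<and> v \<in> U then - d v else 0)"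
proof -
  have fU: "finite U" using assms finV finite_subset by blast
  show ?thesis
  proof (cases "u \<in> U")
    case True
    then show ?thesis using fU by (cases "v \<in> U") (auto simp: copy_type_def psi_def insert_absorb)
  next
    case False
    then show ?thesis using fU by (cases "v \<in> U") (auto simp: copy_type_def psi_def sum_diff1)
  qed
qed

lemma nbr_swap: "(\<Sum>u\<in>V. \<Sum>v\<in>nbrs V E u. H u v) = (\<Sum>u\<in>V. \<Sum>v\<in>nbrs V E u. H v u)"
proof -
  have e: "\<And>u G. (\<Sum>v\<in>nbrs V E u. G v) = (\<Sum>v\<in>V. if E u v then G v else 0)"
    unfolding nbrs_def by (rule sum.inter_filter[OF finV])
  have "(\<Sum>u\<in>V. \<Sum>v\<in>nbrs V E u. H u v) = (\<Sum>u\<in>V. \<Sum>v\<in>V. if E u v then H u v else 0)"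
    by (simp add: e)
  also have "\<dots> = (\<Sum>v\<in>V. \<Sum>u\<in>V. if E u v then H u v else 0)" by (rule sum.swap)
  also have "\<dots> = (\<Sum>v\<in>V. \<Sum>u\<in>V. if E v u then H u v else 0)"
    by (intro sum.cong refl) (metis esym)
  also have "\<dots> = (\<Sum>u\<in>V. \<Sum>v\<in>nbrs V E u. H v u)" by (simp add: e)
  finally show ?thesis .
qed

lemma bd_alt: "bd S u = fitness r S u / (W S * d u)" by (simp add: bd_def W_def d_def)
lemma db_alt: "db S v u = fitness r S u / (real (card V) * F S v)" by (simp add: db_def F_def)

end


context mor begin

lemma drift_psi:
  assumes sq: "\<And>u v. E u v \<Longrightarrow> d u ^ 2 \<le> r * d v ^ 2" and U: "U \<subseteq> V"
  shows "Drift U (\<lambda>u v. psi (copy_type U u v) - psi U) \<ge> 0"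
proof -
  define gain where "gain u v = (if u \<in> U \<and> v \<notin> U then d v else 0)" for u v
  define loss where "loss u v = (if u \<notin> U \<and> v \<in> U then d v else 0)" for u v
  have eq: "Drift U (\<lambda>u v. psi (copy_type U u v) - psi U) = Drift U (\<lambda>u v. gain u v - loss u v)"
    by (rule Drift_cong) (auto simp: psi_copy[OF U] edgeV gain_def loss_def)
  have B: "(\<Sum>u\<in>V. \<Sum>v\<in>nbrs V E u. bd U u * (gain u v - loss u v))
     = (\<Sum>u\<in>V. \<Sum>v\<in>nbrs V E u. bd U u * gain u v - bd U v * loss v u)"
  proof -
    have "(\<Sum>u\<in>V. \<Sum>v\<in>nbrs V E u. bd U u * (gain u v - loss u v))
       = (\<Sum>u\<in>V. \<Sum>v\<in>nbrs V E u. bd U u * gain u v) - (\<Sum>u\<in>V. \<Sum>v\<in>nbrs V E u. bd U u * loss u v)"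
      by (simp add: right_diff_distrib sum_subtractf)
    also have "(\<Sum>u\<in>V. \<Sum>v\<in>nbrs V E u. bd U u * loss u v) = (\<Sum>u\<in>V. \<Sum>v\<in>nbrs V E u. bd U v * loss v u)"
      by (rule nbr_swap)
    finally show ?thesis by (simp add: sum_subtractf)
  qed
  have Bnn: "(\<Sum>u\<in>V. \<Sum>v\<in>nbrs V E u. bd U u * gain u v - bd U v * loss v u) \<ge> 0"
  proof (intro sum_nonneg)
    fix u v assume u: "u \<in> V" and v: "v \<in> nbrs V E u"
    have e: "E u v" using v by (simp add: in_nbrs)
    have vV: "v \<in> V" using edgeV[OF e] by simp
    show "bd U u * gain u v - bd U v * loss v u \<ge> 0"
    proof (cases "u \<in> U \<and> v \<notin> U")
      case True
      have du: "d u > 0" using d_pos[OF u] . have dv: "d v > 0" using d_pos[OF vV] .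
      have W: "W U > 0" by (rule W_pos)
      have "bd U u * gain u v - bd U v * loss v u = r / (W U * d u) * d v - 1 / (W U * d v) * d u"
        using True by (simp add: gain_def loss_def bd_alt fitness_def)
      also have "\<dots> = (r * d v ^ 2 - d u ^ 2) / (W U * d u * d v)"
        using du dv W by (simp add: field_simps power2_eq_square)
      also have "\<dots> \<ge> 0" using sq[OF e] du dv W by (intro divide_nonneg_pos) auto
      finally show ?thesis .
    next
      case False
      then show ?thesis by (auto simp: gain_def loss_def)
    qed
  qed
  have D: "(\<Sum>v\<in>V. \<Sum>u\<in>nbrs V E v. db U v u * (gain u v - loss u v))
     = (\<Sum>v\<in>V. \<Sum>u\<in>nbrs V E v. db U v u * gain u v - db U u v * loss v u)"
  proof -
    have "(\<Sum>v\<in>V. \<Sum>u\<in>nbrs V E v. db U v u * (gain u v - loss u v))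
       = (\<Sum>v\<in>V. \<Sum>u\<in>nbrs V E v. db U v u * gain u v) - (\<Sum>v\<in>V. \<Sum>u\<in>nbrs V E v. db U v u * loss u v)"
      by (simp add: right_diff_distrib sum_subtractf)
    also have "(\<Sum>v\<in>V. \<Sum>u\<in>nbrs V E v. db U v u * loss u v) = (\<Sum>v\<in>V. \<Sum>u\<in>nbrs V E v. db U u v * loss v u)"
      by (rule nbr_swap)
    finally show ?thesis by (simp add: sum_subtractf)
  qed
  have Dnn: "(\<Sum>v\<in>V. \<Sum>u\<in>nbrs V E v. db U v u * gain u v - db U u v * loss v u) \<ge> 0"
  proof (intro sum_nonneg)
    fix v u assume v: "v \<in> V" and u: "u \<in> nbrs V E v"
    have e: "E v u" using u by (simp add: in_nbrs)
    have uV: "u \<in> V" using edgeV[OF e] by simp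
    show "db U v u * gain u v - db U u v * loss v u \<ge> 0"
    proof (cases "u \<in> U \<and> v \<notin> U")
      case True
      have du: "d u > 0" using d_pos[OF uV] . have dv: "d v > 0" using d_pos[OF v] .
      have Fv: "F U v > 0" using F_pos[OF v] . have Fu: "F U u > 0" using F_pos[OF uV] .
      have Fvle: "F U v \<le> r * d v" using F_le[of U v] by (simp add: d_def)
      have Fuge: "F U u \<ge> d u" using F_ge[where S=U and v=u] by (simp add: d_def)
      have n: "real (card V) > 0" by (rule cardpos)
      have "db U v u * gain u v - db U u v * loss v u
          = r / (real (card V) * F U v) * d v - 1 / (real (card V) * F U u) * d u"
        using True by (simp add: gain_def loss_def db_alt fitness_def)
      also have "\<dots> = (r * d v / F U v - d u / F U u) / real (card V)"
        using n Fv Fu by (simp add: field_simps)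
      also have "\<dots> \<ge> 0"
      proof -
        have "r * d v / F U v \<ge> 1" using Fvle Fv by simp
        moreover have "d u / F U u \<le> 1" using Fuge Fu by simp
        ultimately show ?thesis using n by (intro divide_nonneg_pos) auto
      qed
      finally show ?thesis .
    next
      case False
      then show ?thesis by (auto simp: gain_def loss_def)
    qed
  qed
  have "Drift U (\<lambda>u v. gain u v - loss u v) \<ge> 0"
    unfolding Drift_def B D using Bnn Dnn lam0 lam1 by (intro add_nonneg_nonneg mult_nonneg_nonneg) auto
  then show ?thesis using eq by simp
qed

lemma crossing: assumes "E\<^sup>*\<^sup>* x y" "x \<in> U" "y \<notin> U" shows "\<exists>u v. E u v \<and> u \<in> U \<and> v \<notin> U"
  using assms by (induction rule: rtranclp_induct) auto

definition dmin where "dmin = real (Min (deg V E ` V))"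
definition dmax where "dmax = real (Max (deg V E ` V))"

lemma Vne: "V \<noteq> {}" using card2 by auto

lemma dmin_le: "u \<in> V \<Longrightarrow> dmin \<le> d u"
  unfolding dmin_def d_def using finV by simp
lemma dmax_ge: "u \<in> V \<Longrightarrow> d u \<le> dmax"
  unfolding dmax_def d_def using finV by simp
lemma dmin_ge1: "dmin \<ge> 1"
proof -
  have "Min (deg V E ` V) \<in> deg V E ` V" using finV Vne by simp
  then obtain u where "u \<in> V" "Min (deg V E ` V) = deg V E u" by auto
  then show ?thesis using deg_pos[of u] by (simp add: dmin_def)
qed
lemma dmin_dmax: "dmin \<le> dmax" using dmin_le dmax_ge Vne by fastforce
lemma dmax_le_n: "dmax \<le> real (card V)"
proof -
  have "Max (deg V E ` V) \<in> deg V E ` V" using finV Vne by simp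
  then obtain u where "u \<in> V" "Max (deg V E ` V) = deg V E u" by auto
  then show ?thesis using deg_le[of u] by (simp add: dmax_def)
qed

lemma drift_sq:
  assumes U: "U \<subseteq> V" "U \<noteq> {}" "U \<noteq> V"
  shows "Drift U (\<lambda>u v. (psi (copy_type U u v) - psi U)^2) \<ge> dmin^2 / (real (card V) * dmax)"
proof -
  obtain x where x: "x \<in> U" using U by auto
  obtain y where y: "y \<in> V" "y \<notin> U" using U by auto
  have "E\<^sup>*\<^sup>* x y" using reach x y U by auto
  then obtain u0 v0 where e: "E u0 v0" and uv: "u0 \<in> U" "v0 \<notin> U" using crossing x y by blast
  have u0: "u0 \<in> V" and v0: "v0 \<in> V" using edgeV[OF e] by auto
  define h where "h u v = (psi (copy_type U u v) - psi U)^2" for u v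
  have hnn: "h u v \<ge> 0" for u v by (simp add: h_def)
  have h0: "h u0 v0 = d v0 ^ 2" using uv v0 by (simp add: h_def psi_copy[OF U(1)])
  define L where "L = dmin^2 / (real (card V) * dmax)"
  have n: "real (card V) > 0" by (rule cardpos)
  have dm: "dmin \<ge> 1" by (rule dmin_ge1)
  have dM: "dmax \<ge> dmin" by (rule dmin_dmax)
  have du: "d u0 > 0" "d u0 \<le> dmax" using d_pos[OF u0] dmax_ge[OF u0] by auto
  have dv: "d v0 \<ge> dmin" using dmin_le[OF v0] .
  have B: "(\<Sum>u\<in>V. \<Sum>v\<in>nbrs V E u. bd U u * h u v) \<ge> L"
  proof -
    have "bd U u0 * h u0 v0 \<le> (\<Sum>v\<in>nbrs V E u0. bd U u0 * h u0 v)"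
      by (rule member_le_sum) (auto simp: in_nbrs e bd_nn hnn)
    also have "\<dots> \<le> (\<Sum>u\<in>V. \<Sum>v\<in>nbrs V E u. bd U u * h u v)"
      by (rule member_le_sum[where f="\<lambda>u. \<Sum>v\<in>nbrs V E u. bd U u * h u v"])
         (auto simp: u0 finV bd_nn hnn intro!: sum_nonneg)
    moreover have "L \<le> bd U u0 * h u0 v0"
    proof -
      have W: "W U > 0" "W U \<le> r * real (card V)" using W_pos W_le by auto
      have "bd U u0 * h u0 v0 = r * d v0 ^ 2 / (W U * d u0)" using uv h0 by (simp add: bd_alt fitness_def)
      also have "\<dots> \<ge> r * dmin ^ 2 / ((r * real (card V)) * dmax)"
        using W du dv dm r1 n
        by (intro frac_le mult_left_mono power_mono mult_mono mult_pos_pos) auto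
      also have "r * dmin ^ 2 / ((r * real (card V)) * dmax) = L"
        using r1 by (simp add: L_def)
      finally show ?thesis .
    qed
    ultimately show ?thesis by linarith
  qed
  have D: "(\<Sum>v\<in>V. \<Sum>u\<in>nbrs V E v. db U v u * h u v) \<ge> L"
  proof -
    have "db U v0 u0 * h u0 v0 \<le> (\<Sum>u\<in>nbrs V E v0. db U v0 u * h u v0)"
      by (rule member_le_sum) (auto simp: in_nbrs esym[OF e] db_nn hnn)
    also have "\<dots> \<le> (\<Sum>v\<in>V. \<Sum>u\<in>nbrs V E v. db U v u * h u v)"
      by (rule member_le_sum[where f="\<lambda>v. \<Sum>u\<in>nbrs V E v. db U v u * h u v"])
         (auto simp: v0 finV db_nn hnn intro!: sum_nonneg)
    moreover have "L \<le> db U v0 u0 * h u0 v0"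
    proof -
      have Fv: "F U v0 > 0" "F U v0 \<le> r * d v0" using F_pos[OF v0] F_le[of U v0] by (auto simp: d_def)
      have dv0: "d v0 > 0" using d_pos[OF v0] .
      have "db U v0 u0 * h u0 v0 = r * d v0 ^ 2 / (real (card V) * F U v0)" using uv h0 by (simp add: db_alt fitness_def)
      also have "\<dots> \<ge> r * d v0 ^ 2 / (real (card V) * (r * d v0))"
        using Fv n dv0 r1 by (intro divide_left_mono mult_left_mono mult_pos_pos) auto
      also have "r * d v0 ^ 2 / (real (card V) * (r * d v0)) = d v0 / real (card V)"
        using r1 dv0 by (simp add: power2_eq_square)
      also have "d v0 / real (card V) \<ge> dmin / real (card V)" using dv n by (simp add: divide_right_mono)
      also have "dmin / real (card V) \<ge> L"
      proof -
        have "dmin ^ 2 / dmax \<le> dmin" using dm dM by (simp add: power2_eq_square field_simps)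
        then show ?thesis using n dm dM by (simp add: L_def field_simps)
      qed
      finally show ?thesis .
    qed
    ultimately show ?thesis by linarith
  qed
  have "Drift U h = lam * (\<Sum>u\<in>V. \<Sum>v\<in>nbrs V E u. bd U u * h u v)
     + (1 - lam) * (\<Sum>v\<in>V. \<Sum>u\<in>nbrs V E v. db U v u * h u v)" by (simp add: Drift_def)
  also have "\<dots> \<ge> lam * L + (1 - lam) * L"
    using B D lam0 lam1 by (intro add_mono mult_left_mono) auto
  finally have "Drift U h \<ge> L" by (simp add: algebra_simps)
  moreover have "Drift U h = Drift U (\<lambda>u v. (psi (copy_type U u v) - psi U)^2)"
    by (rule Drift_cong) (simp add: h_def)
  ultimately show ?thesis by (simp add: L_def)
qed

end



locale mor2 = mor +
  fixes S0
  assumes sq: "\<And>u v. E u v \<Longrightarrow> d u ^ 2 \<le> r * d v ^ 2"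
    and S0sub: "S0 \<subseteq> V" and S0ne: "S0 \<noteq> {}"
begin

definition Phi where "Phi = psi V"
definition K where "K = real (card V) * dmax / dmin^2"
definition g where "g S = K * (Phi^2 - psi S ^ 2)"

lemma d_nn: "d u \<ge> 0" by (simp add: d_def)
lemma psi_nn: "psi S \<ge> 0" unfolding psi_def by (simp add: sum_nonneg d_nn)
lemma psi_le: "S \<subseteq> V \<Longrightarrow> psi S \<le> Phi"
  unfolding Phi_def psi_def by (rule sum_mono2[OF finV]) (auto simp: d_nn)
lemma K_nn: "K \<ge> 0" unfolding K_def using dmin_ge1 dmin_dmax by simp
lemma g_nn: "S \<subseteq> V \<Longrightarrow> g S \<ge> 0"
  unfolding g_def using psi_nn[of S] psi_le[of S] K_nn
  by (intro mult_nonneg_nonneg) (auto simp: power_mono)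

abbreviation D where "D U u v \<equiv> psi (copy_type U u v) - psi U"

lemma Exp_const: "U \<subseteq> V \<Longrightarrow> Exp U (\<lambda>_. c) = c"
  by (simp add: Exp_Drift Drift_const)

lemma Exp_psi: assumes U: "U \<subseteq> V" shows "Exp U psi \<ge> psi U"
proof -
  have "Exp U psi = Drift U (\<lambda>u v. psi U + 1 * D U u v + 0 * D U u v)"
    unfolding Exp_Drift[OF U] by (rule Drift_cong) simp
  also have "\<dots> = psi U + Drift U (D U)" using Drift_affine[of U "psi U" 1 "D U" 0 "D U"] by simp
  finally show ?thesis using drift_psi[OF sq U] by simp
qed

lemma KL: "K * (dmin^2 / (real (card V) * dmax)) = 1"
  unfolding K_def using dmin_ge1 dmin_dmax cardpos by (simp add: field_simps)

lemma Exp_g: assumes U: "U \<subseteq> V"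
  shows "Exp U g \<le> g U - (if U \<noteq> {} \<and> U \<noteq> V then 1 else 0)"
proof -
  have "Exp U g = Drift U (\<lambda>u v. g U + (- 2 * K * psi U) * D U u v + (- K) * (D U u v)^2)"
    unfolding Exp_Drift[OF U] by (rule Drift_cong) (simp add: g_def power2_eq_square algebra_simps)
  also have "\<dots> = g U + (- 2 * K * psi U) * Drift U (D U) + (- K) * Drift U (\<lambda>u v. (D U u v)^2)"
    by (rule Drift_affine)
  finally have eq: "Exp U g = \<dots>" .
  have a: "(- 2 * K * psi U) * Drift U (D U) \<le> 0"
    using drift_psi[OF sq U] K_nn psi_nn[of U] by (simp add: mult_nonneg_nonneg)
  have b: "K * Drift U (\<lambda>u v. (D U u v)^2) \<ge> (if U \<noteq> {} \<and> U \<noteq> V then 1 else 0)"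
  proof (cases "U \<noteq> {} \<and> U \<noteq> V")
    case True
    have "K * Drift U (\<lambda>u v. (D U u v)^2) \<ge> K * (dmin^2 / (real (card V) * dmax))"
      using drift_sq[OF U] True K_nn by (intro mult_left_mono) auto
    then have "K * Drift U (\<lambda>u v. (D U u v)^2) \<ge> 1" using KL by linarith
    then show ?thesis using True by simp
  next
    case False
    have "Drift U (\<lambda>u v. (D U u v)^2) \<ge> 0" by (rule Drift_nn) simp
    moreover have "(if U \<noteq> {} \<and> U \<noteq> V then 1 else 0) = (0::real)" using False by simp
    ultimately show ?thesis using K_nn by (simp add: mult_nonneg_nonneg)
  qed
  show ?thesis using eq a b by simp
qed

abbreviation p where "p k T \<equiv> moran_steps V E lam r k S0 T"
definition Ek where "Ek k f = (\<Sum>T\<in>Pow V. p k T * f T)"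
definition tau where "tau k = (\<Sum>U\<in>Pow V - {{}, V}. p k U)"

lemma Ek_Suc: "Ek (Suc k) f = (\<Sum>U\<in>Pow V. p k U * Exp U f)"
  unfolding Ek_def by (rule chain)

lemma Ek_0: "Ek 0 f = f S0"
  unfolding Ek_def using sum_delta1[of "Pow V" S0 f] finV S0sub by simp

lemma mass: "Ek k (\<lambda>_. 1) = 1"
proof (induction k)
  case 0 then show ?case by (simp add: Ek_0)
next
  case (Suc k)
  have "Ek (Suc k) (\<lambda>_. 1) = (\<Sum>U\<in>Pow V. p k U * 1)"
    unfolding Ek_Suc by (rule sum.cong) (auto simp: Exp_const)
  then show ?case using Suc by (simp add: Ek_def)
qed

lemma psi_sub: "Ek k psi \<ge> psi S0"
proof (induction k)
  case 0 then show ?case by (simp add: Ek_0)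
next
  case (Suc k)
  have "Ek k psi \<le> (\<Sum>U\<in>Pow V. p k U * Exp U psi)"
    unfolding Ek_def by (rule sum_mono, rule mult_left_mono, rule Exp_psi) (auto simp: steps_nn)
  then show ?case using Suc Ek_Suc[of k psi] by simp
qed

lemma tau_alt: "tau k = (\<Sum>U\<in>Pow V. p k U * (if U \<noteq> {} \<and> U \<noteq> V then 1 else 0))"
proof -
  have "Pow V - {{}, V} = {U \<in> Pow V. U \<noteq> {} \<and> U \<noteq> V}" by auto
  then show ?thesis unfolding tau_def using sum.inter_filter[of "Pow V" "p k" "\<lambda>U. U \<noteq> {} \<and> U \<noteq> V"] finV
    by (simp add: if_distrib cong: if_cong)
qed

lemma tau_nn: "tau k \<ge> 0" unfolding tau_def by (rule sum_nonneg) (simp add: steps_nn)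

lemma g_dec: "Ek (Suc k) g \<le> Ek k g - tau k"
proof -
  have "Ek (Suc k) g \<le> (\<Sum>U\<in>Pow V. p k U * (g U - (if U \<noteq> {} \<and> U \<noteq> V then 1 else 0)))"
    unfolding Ek_Suc by (rule sum_mono, rule mult_left_mono, rule Exp_g) (auto simp: steps_nn)
  also have "\<dots> = Ek k g - tau k"
    unfolding Ek_def tau_alt by (simp add: right_diff_distrib sum_subtractf)
  finally show ?thesis .
qed

lemma Ek_g_nn: "Ek k g \<ge> 0"
  unfolding Ek_def by (rule sum_nonneg) (auto intro!: mult_nonneg_nonneg steps_nn g_nn)

lemma tau_partial: "(\<Sum>k<N. tau k) \<le> g S0"
proof -
  have "Ek N g \<le> g S0 - (\<Sum>k<N. tau k)"
  proof (induction N)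
    case 0 then show ?case by (simp add: Ek_0)
  next
    case (Suc N) then show ?case using g_dec[of N] by simp
  qed
  then show ?thesis using Ek_g_nn[of N] by linarith
qed

lemma tau_summable: "summable tau"
  by (rule summableI_nonneg_bounded[where x="g S0"]) (auto simp: tau_nn tau_partial)

lemma absorption_bound: "absorption_time V E lam r S0 \<le> ennreal (g S0)"
proof -
  have "absorption_time V E lam r S0 = (\<Sum>k. ennreal (tau k))"
    unfolding absorption_time_def tau_def by simp
  also have "\<dots> = ennreal (\<Sum>k. tau k)" by (rule suminf_ennreal2) (auto simp: tau_nn tau_summable)
  also have "\<dots> \<le> ennreal (g S0)"
    by (rule ennreal_leI, rule suminf_le_const[OF tau_summable]) (simp add: tau_partial)
  finally show ?thesis .
qed

lemma tau_lim: "tau \<longlonglongrightarrow> 0" by (rule summable_LIMSEQ_zero[OF tau_summable])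

lemma transVV: "moran_trans V E lam r V V = 1"
proof -
  have "moran_trans V E lam r V V = Drift V (\<lambda>u v. 1)"
    unfolding trans_eq by (rule Drift_cong) (auto simp: copy_type_def edgeV insert_absorb)
  then show ?thesis by (simp add: Drift_const)
qed

lemma pV_mono: "p k V \<le> p (Suc k) V"
proof -
  have "p k V * moran_trans V E lam r V V \<le> (\<Sum>U\<in>Pow V. p k U * moran_trans V E lam r U V)"
    by (rule member_le_sum) (auto simp: finV intro!: mult_nonneg_nonneg steps_nn trans_nn)
  then show ?thesis by (simp add: transVV)
qed

lemma pV_le1: "p k V \<le> 1"
proof -
  have "p k V \<le> (\<Sum>T\<in>Pow V. p k T)"
    by (rule member_le_sum) (auto simp: finV steps_nn)
  also have "\<dots> = 1" using mass[of k] by (simp add: Ek_def)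
  finally show ?thesis .
qed

lemma psi_split: "Ek k psi \<le> Phi * p k V + Phi * tau k"
proof -
  have sub: "{{}, V} \<subseteq> Pow V" by auto
  have ne: "{} \<noteq> V" using Vne by auto
  have "Ek k psi = (\<Sum>T\<in>Pow V - {{}, V}. p k T * psi T) + (\<Sum>T\<in>{{}, V}. p k T * psi T)"
    unfolding Ek_def using sum.subset_diff[OF sub, of "\<lambda>T. p k T * psi T"] finV by simp
  also have "(\<Sum>T\<in>{{}, V}. p k T * psi T) = p k V * Phi"
    using ne by (simp add: psi_def Phi_def)
  also have "(\<Sum>T\<in>Pow V - {{}, V}. p k T * psi T) \<le> (\<Sum>T\<in>Pow V - {{}, V}. p k T * Phi)"
    by (rule sum_mono) (auto intro!: mult_left_mono psi_le steps_nn)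
  also have "\<dots> = Phi * tau k" by (simp add: tau_def sum_distrib_left mult.commute)
  finally show ?thesis by (simp add: mult.commute)
qed

lemma Phi_pos: "Phi > 0"
proof -
  obtain x where "x \<in> V" using Vne by auto
  then have "d x \<le> Phi" unfolding Phi_def psi_def by (intro member_le_sum) (auto simp: finV d_nn)
  then show ?thesis using d_pos[OF \<open>x \<in> V\<close>] by linarith
qed

lemma fix_bound: "fixation_prob V E lam r S0 \<ge> psi S0 / Phi"
proof -
  have inc: "incseq (\<lambda>k. p k V)" by (rule incseq_SucI) (rule pV_mono)
  obtain L where L: "(\<lambda>k. p k V) \<longlonglongrightarrow> L"
    using incseq_convergent[OF inc, of 1] pV_le1 by blast
  have lim: "fixation_prob V E lam r S0 = L" unfolding fixation_prob_def using L by (rule limI)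
  have low: "psi S0 / Phi - tau k \<le> p k V" for k
  proof -
    have "psi S0 \<le> Phi * p k V + Phi * tau k" using psi_sub[of k] psi_split[of k] by linarith
    then show ?thesis using Phi_pos by (simp add: field_simps)
  qed
  have "(\<lambda>k. psi S0 / Phi - tau k) \<longlonglongrightarrow> psi S0 / Phi - 0"
    by (intro tendsto_intros tau_lim)
  then have "psi S0 / Phi \<le> L" using L low by (intro LIMSEQ_le[where X="\<lambda>k. psi S0 / Phi - tau k"]) auto
  then show ?thesis using lim by simp
qed

end



context mor2 begin
lemma Phi_le: "Phi \<le> real (card V) * dmax"
proof -
  have "psi V \<le> (\<Sum>x\<in>V. dmax)" unfolding psi_def by (rule sum_mono) (rule dmax_ge)
  then show ?thesis by (simp add: Phi_def)
qed
end

lemma main_inst: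
  fixes \<alpha> r :: real and V :: "'a set" and E lam and S0 :: "'a set"
  assumes A: "\<alpha> \<ge> 1 \<and> connected_graph V E \<and> card V \<ge> 2 \<and> almost_regular \<alpha> V E \<and>
       r \<ge> \<alpha>\<^sup>2 \<and> 0 \<le> lam \<and> lam \<le> 1 \<and> S0 \<subseteq> V \<and> S0 \<noteq> {}"
  shows "absorption_time V E lam r S0 \<le> ennreal ((\<bar>r\<bar> + 1) * real (card V) ^ 4) \<and>
         fixation_prob V E lam r S0 \<ge> 1 / (\<bar>r\<bar> + 1) / real (card V) ^ 2"
proof -
  have a1: "\<alpha> \<ge> 1" and ar: "r \<ge> \<alpha>^2" using A by auto
  have aa: "\<alpha> \<le> \<alpha>^2" using a1 by (simp add: power2_eq_square)
  have r1: "r \<ge> 1" using a1 aa ar by linarith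
  interpret mor V E lam r
    by unfold_locales (use A r1 in auto)
  have reg: "dmax \<le> \<alpha> * dmin" using A by (simp add: almost_regular_def dmax_def dmin_def)
  have sq: "d u ^ 2 \<le> r * d v ^ 2" if e: "E u v" for u v
  proof -
    have uV: "u \<in> V" and vV: "v \<in> V" using edgeV[OF e] by auto
    have "d u \<le> \<alpha> * d v"
      using dmax_ge[OF uV] reg dmin_le[OF vV] a1 by (meson mult_left_mono order.trans zero_le_one)
    then have "d u ^ 2 \<le> (\<alpha> * d v) ^ 2" using d_pos[OF uV] by (intro power_mono) auto
    also have "\<dots> = \<alpha>^2 * d v ^ 2" by (simp add: power_mult_distrib)
    also have "\<dots> \<le> r * d v ^ 2" using ar by (intro mult_right_mono) auto
    finally show ?thesis .
  qed
  interpret mor2 V E lam r S0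
    by unfold_locales (use A sq in auto)
  define n where "n = real (card V)"
  have n: "n \<ge> 2" using A by (simp add: n_def)
  have dm: "dmin \<ge> 1" by (rule dmin_ge1)
  have dM: "dmin \<le> dmax" by (rule dmin_dmax)
  have dMn: "dmax \<le> n" unfolding n_def by (rule dmax_le_n)
  have Phi_le': "Phi \<le> n * dmax" unfolding n_def by (rule Phi_le)
  have Phi0: "Phi > 0" by (rule Phi_pos)
  
  have "g S0 \<le> K * Phi^2" unfolding g_def using K_nn by (intro mult_left_mono) auto
  also have "\<dots> \<le> K * (n * dmax)^2" using K_nn Phi0 Phi_le' by (intro mult_left_mono power_mono) auto
  also have "\<dots> = n^3 * dmax^3 / dmin^2" unfolding K_def n_def[symmetric]
    by (simp add: power2_eq_square power3_eq_cube)
  also have "\<dots> \<le> n^4 * r"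
  proof -
    have "dmax ^ 2 \<le> (\<alpha> * dmin)^2" using reg dm dM by (intro power_mono) auto
    also have "\<dots> = \<alpha>^2 * dmin^2" by (simp add: power_mult_distrib)
    also have "\<dots> \<le> r * dmin^2" using ar by (intro mult_right_mono) auto
    finally have s: "dmax ^ 2 \<le> r * dmin ^ 2" .
    have "dmax ^ 3 = dmax * dmax ^ 2" by (simp add: power3_eq_cube power2_eq_square)
    also have "\<dots> \<le> n * (r * dmin ^ 2)" using s dMn dm dM r1 by (intro mult_mono) auto
    finally have "dmax ^ 3 \<le> n * r * dmin ^ 2" by simp
    then have "n^3 * dmax^3 \<le> n^3 * (n * r * dmin ^ 2)" using n by (intro mult_left_mono) auto
    then show ?thesis using dm by (simp add: divide_le_eq power_def algebra_simps)
  qed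
  also have "\<dots> \<le> (\<bar>r\<bar> + 1) * n ^ 4" using n by (simp add: mult.commute mult_left_mono)
  finally have gb: "g S0 \<le> (\<bar>r\<bar> + 1) * n ^ 4" .
  have abs: "absorption_time V E lam r S0 \<le> ennreal ((\<bar>r\<bar> + 1) * real (card V) ^ 4)"
    using absorption_bound gb n_def by (metis ennreal_leI order.trans)
  
  obtain x where x: "x \<in> S0" using A by auto
  have xV: "x \<in> V" using x A by auto
  have "dmin \<le> d x" by (rule dmin_le[OF xV])
  also have "d x \<le> psi S0" unfolding psi_def
    using x A finV by (intro member_le_sum) (auto simp: d_def intro: finite_subset)
  finally have ps: "dmin \<le> psi S0" .
  have "1 / (\<bar>r\<bar> + 1) / n^2 \<le> 1 / (n * \<alpha>)"
  proof -
    have ar2: "\<alpha> \<le> \<bar>r\<bar> + 1" using aa ar abs_ge_self[of r] by linarith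
    have "n * \<alpha> \<le> n^2 * (\<bar>r\<bar> + 1)"
      using n a1 ar2 by (intro mult_mono) (auto simp: power2_eq_square)
    then have le: "n * \<alpha> \<le> (\<bar>r\<bar> + 1) * n^2" by (simp add: mult.commute)
    have pos: "0 < (\<bar>r\<bar> + 1) * n^2 * (n * \<alpha>)" using n a1 by (intro mult_pos_pos) auto
    have "1 / (\<bar>r\<bar> + 1) / n^2 = 1 / ((\<bar>r\<bar> + 1) * n^2)" by simp
    also have "\<dots> \<le> 1 / (n * \<alpha>)" by (rule divide_left_mono[OF le _ pos]) simp
    finally show ?thesis .
  qed
  also have "1 / (n * \<alpha>) = dmin / (n * (\<alpha> * dmin))" using dm by simp
  also have "\<dots> \<le> psi S0 / Phi"
    using ps Phi_le' reg Phi0 dm n by (intro frac_le) (auto intro: order.trans mult_left_mono)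
  also have "\<dots> \<le> fixation_prob V E lam r S0" by (rule fix_bound)
  finally have fx: "fixation_prob V E lam r S0 \<ge> 1 / (\<bar>r\<bar> + 1) / real (card V) ^ 2" by (simp add: n_def)
  show ?thesis using abs fx by simp
qed

theorem mainTheorem8:
  fixes r :: real
  shows "\<exists>C c. C > 0 \<and> c > 0 \<and>
    (\<forall>(\<alpha>::real) (V::nat set) (E::nat \<Rightarrow> nat \<Rightarrow> bool) (lam::real) (S0::nat set).
       \<alpha> \<ge> 1 \<and> connected_graph V E \<and> card V \<ge> 2 \<and> almost_regular \<alpha> V E \<and>
       r \<ge> \<alpha>\<^sup>2 \<and> 0 \<le> lam \<and> lam \<le> 1 \<and> S0 \<subseteq> V \<and> S0 \<noteq> {} \<longrightarrow>
         absorption_time V E lam r S0 \<le> ennreal (C * real (card V) ^ 4) \<and>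
         fixation_prob V E lam r S0 \<ge> c / real (card V) ^ 2)"
proof -
  have "(\<bar>r\<bar> + 1) > 0 \<and> 1 / (\<bar>r\<bar> + 1) > 0" by simp
  then show ?thesis using main_inst[where r=r] by blast
qed



end
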